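(* For every finite metric space $(X,d)$, every $S\subseteq X$, every $p\in(0,1)$ and every $\tau>0$, there exists a $1$-Lipschitz map $\varphi:X\to L_2$ such that for every $x,y\in S$ with $d(x,y)\ge\tau$, $$\|\varphi(x)-\varphi(y)\|_2\ge \frac{\tau\sqrt p}{\zeta(S;p)}.$$
   Context: $L_2$ denotes a Hilbert space. For a finite metric space $(Y,d)$ (here $S$ with the restricted metric), given $\Delta,\zeta>0$ and $p\in(0,1)$, $Y$ admits a random zero set at scale $\Delta$ which is $\zeta$-spreading with probability $p$ if there is a probability distribution $\mu$ over subsets $Z\subseteq Y$ such that for all $x,y\in Y$ with $d(x,y)\ge\Delta$, $\mu\{Z: y\in Z\text{ and } d(x,Z)\ge\Delta/\zeta\}\ge p$. $\zeta(Y;p)$ is the least $\zeta>0$ such that for every $\Delta>0$, $Y$ admits a random zero set at scale $\Delta$ which is $\zeta$-spreading with probability $p$. *)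

theory Defs
  imports "HOL-Analysis.Analysis" "HOL-Probability.Probability_Mass_Function"
begin

definition finite_metric_space :: "'a set \<Rightarrow> ('a \<Rightarrow> 'a \<Rightarrow> real) \<Rightarrow> bool" where
  "finite_metric_space X d \<longleftrightarrow> finite X \<and>
     (\<forall>x\<in>X. \<forall>y\<in>X. d x y \<ge> 0 \<and> (d x y = 0 \<longleftrightarrow> x = y) \<and> d x y = d y x) \<and>
     (\<forall>x\<in>X. \<forall>y\<in>X. \<forall>z\<in>X. d x z \<le> d x y + d y z)"

definition set_dist :: "('a \<Rightarrow> 'a \<Rightarrow> real) \<Rightarrow> 'a \<Rightarrow> 'a set \<Rightarrow> real" where
  "set_dist d x Z = (INF z\<in>Z. d x z)"

definition spreading_zero_set ::
  "('a \<Rightarrow> 'a \<Rightarrow> real) \<Rightarrow> 'a set \<Rightarrow> real \<Rightarrow> real \<Rightarrow> real \<Rightarrow> 'a set pmf \<Rightarrow> bool" where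
  "spreading_zero_set d Y \<Delta> \<zeta> p \<mu> \<longleftrightarrow>
     set_pmf \<mu> \<subseteq> Pow Y \<and>
     (\<forall>x\<in>Y. \<forall>y\<in>Y. d x y \<ge> \<Delta> \<longrightarrow>
        measure_pmf.prob \<mu> {Z. y \<in> Z \<and> set_dist d x Z \<ge> \<Delta> / \<zeta>} \<ge> p)"

text \<open>zeta(Y;p): least zeta > 0 admitting such random zero sets at every scale;
  valued in ereal, equal to \<infinity> when no such zeta exists.\<close>
definition zeta_spread :: "('a \<Rightarrow> 'a \<Rightarrow> real) \<Rightarrow> 'a set \<Rightarrow> real \<Rightarrow> ereal" where
  "zeta_spread d Y p = Inf (ereal ` {\<zeta>. \<zeta> > 0 \<and>
      (\<forall>\<Delta>>0. \<exists>\<mu>. spreading_zero_set d Y \<Delta> \<zeta> p \<mu>)})"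

end

theory Submission imports Defs begin

lemma sd_le: "finite Z \<Longrightarrow> z \<in> Z \<Longrightarrow> set_dist d x Z \<le> d x z"
  unfolding set_dist_def by (rule cINF_lower) (auto intro: bdd_below_finite)

lemma sd_ge: "Z \<noteq> {} \<Longrightarrow> (\<And>z. z \<in> Z \<Longrightarrow> c \<le> d x z) \<Longrightarrow> c \<le> set_dist d x Z"
  unfolding set_dist_def by (rule cINF_greatest) auto

lemma fms_fin: "finite_metric_space X d \<Longrightarrow> finite X"
  unfolding finite_metric_space_def by auto

lemma sd_self:
  assumes "finite_metric_space X d" "Z \<subseteq> X" "y \<in> Z"
  shows "set_dist d y Z = 0"
proof -
  have f: "finite Z" using assms fms_fin finite_subset by blast
  have "set_dist d y Z \<le> d y y" using sd_le[OF f assms(3)] .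
  moreover have "d y y = 0" using assms unfolding finite_metric_space_def by auto
  moreover have "0 \<le> set_dist d y Z"
    using assms by (intro sd_ge) (auto simp: finite_metric_space_def subset_iff)
  ultimately show ?thesis by linarith
qed

lemma sd_lip1:
  assumes "finite_metric_space X d" "Z \<subseteq> X" "x \<in> X" "y \<in> X"
  shows "set_dist d x Z \<le> d x y + set_dist d y Z"
proof (cases "Z = {}")
  case True then show ?thesis using assms by (simp add: finite_metric_space_def set_dist_def)
next
  case False
  have f: "finite Z" using assms fms_fin finite_subset by blast
  have "set_dist d x Z - d x y \<le> set_dist d y Z"
  proof (rule sd_ge[OF False])
    fix z assume z: "z \<in> Z"
    have "set_dist d x Z \<le> d x z" using sd_le[OF f z] .
    also have "\<dots> \<le> d x y + d y z" using assms z unfolding finite_metric_space_def by blast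
    finally show "set_dist d x Z - d x y \<le> d y z" by simp
  qed
  then show ?thesis by simp
qed

lemma sd_lip:
  assumes "finite_metric_space X d" "Z \<subseteq> X" "x \<in> X" "y \<in> X"
  shows "\<bar>set_dist d x Z - set_dist d y Z\<bar> \<le> d x y"
  using sd_lip1[OF assms] sd_lip1[OF assms(1,2,4,3)] assms
  unfolding finite_metric_space_def by auto

lemma embed:
  assumes "finite S"
  shows "\<exists>(n::nat) (\<phi>::'a \<Rightarrow> nat \<Rightarrow> real). \<forall>x y.
     L2_set (\<lambda>i. \<phi> x i - \<phi> y i) {..<n} =
       sqrt (\<Sum>Z\<in>Pow S. pmf \<mu> Z * (set_dist d x Z - set_dist d y Z)^2)"
proof -
  obtain h where h: "bij_betw h {0..<card (Pow S)} (Pow S)"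
    using ex_bij_betw_nat_finite assms by blast
  define \<phi> where "\<phi> x i = sqrt (pmf \<mu> (h i)) * set_dist d x (h i)" for x i
  show ?thesis
  proof (intro exI allI)
    fix x y
    have "L2_set (\<lambda>i. \<phi> x i - \<phi> y i) {..<card (Pow S)}
       = sqrt (\<Sum>i\<in>{0..<card (Pow S)}. pmf \<mu> (h i) * (set_dist d x (h i) - set_dist d y (h i))^2)"
      unfolding L2_set_def \<phi>_def
      by (intro arg_cong[where f=sqrt] sum.cong)
         (auto simp: power_mult_distrib right_diff_distrib[symmetric] pmf_nonneg)
    also have "\<dots> = sqrt (\<Sum>Z\<in>Pow S. pmf \<mu> Z * (set_dist d x Z - set_dist d y Z)^2)"
      using sum.reindex_bij_betw[OF h, of "\<lambda>Z. pmf \<mu> Z * (set_dist d x Z - set_dist d y Z)^2"]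
      by simp
    finally show "L2_set (\<lambda>i. \<phi> x i - \<phi> y i) {..<card (Pow S)} = sqrt (\<Sum>Z\<in>Pow S. pmf \<mu> Z * (set_dist d x Z - set_dist d y Z)^2)" .
  qed
qed

lemma sum_pmf_le1: "finite T \<Longrightarrow> sum (pmf \<mu>) T \<le> 1"
  using measure_measure_pmf_finite[of T \<mu>] measure_pmf.prob_le_1[of \<mu> T] by simp

lemma prob_le_sum:
  assumes "set_pmf \<mu> \<subseteq> Pow S" "finite S"
  shows "measure_pmf.prob \<mu> E \<le> sum (pmf \<mu>) (E \<inter> Pow S)"
proof -
  have "measure_pmf.prob \<mu> E = measure_pmf.prob \<mu> (E \<inter> set_pmf \<mu>)"
    by (simp add: measure_Int_set_pmf)
  also have "\<dots> \<le> measure_pmf.prob \<mu> (E \<inter> Pow S)"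
    using assms by (intro measure_pmf.finite_measure_mono) auto
  also have "\<dots> = sum (pmf \<mu>) (E \<inter> Pow S)"
    using assms by (intro measure_measure_pmf_finite) auto
  finally show ?thesis .
qed

theorem lemma3p5:
  fixes X S :: "'a set" and d :: "'a \<Rightarrow> 'a \<Rightarrow> real" and p \<tau> :: real
  assumes "finite_metric_space X d" and "S \<subseteq> X"
    and "0 < p" and "p < 1" and "\<tau> > 0"
  shows "\<exists>(n::nat) (\<phi>::'a \<Rightarrow> nat \<Rightarrow> real).
           (\<forall>x\<in>X. \<forall>y\<in>X. L2_set (\<lambda>i. \<phi> x i - \<phi> y i) {..<n} \<le> d x y) \<and>
           (\<forall>x\<in>S. \<forall>y\<in>S. d x y \<ge> \<tau> \<longrightarrow>
              ereal (\<tau> * sqrt p) / zeta_spread d S p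
                \<le> ereal (L2_set (\<lambda>i. \<phi> x i - \<phi> y i) {..<n}))"
proof -
  note fms = assms(1)
  have finS: "finite S" using fms fms_fin assms(2) finite_subset by blast
  have dnn: "\<And>x y. x \<in> X \<Longrightarrow> y \<in> X \<Longrightarrow> 0 \<le> d x y"
    using fms unfolding finite_metric_space_def by blast
  define A where "A = {\<zeta>. \<zeta> > 0 \<and> (\<forall>\<Delta>>0. \<exists>\<mu>. spreading_zero_set d S \<Delta> \<zeta> p \<mu>)}"
  have zs: "zeta_spread d S p = Inf (ereal ` A)" unfolding zeta_spread_def A_def by simp
  show ?thesis
  proof (cases "(\<forall>x\<in>S. \<forall>y\<in>S. \<not> \<tau> \<le> d x y) \<or> A = {}")
    case True
    show ?thesis
    proof (intro exI[of _ 0] exI[of _ "\<lambda>_ _. 0"] conjI ballI impI)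
      fix x y assume "x \<in> X" "y \<in> X"
      then show "L2_set (\<lambda>i. (0::real) - 0) {..<0} \<le> d x y" using dnn by (simp add: L2_set_def)
    next
      fix x y assume "x \<in> S" "y \<in> S" "\<tau> \<le> d x y"
      then have "A = {}" using True by blast
      then show "ereal (\<tau> * sqrt p) / zeta_spread d S p \<le> ereal (L2_set (\<lambda>i. (0::real) - 0) {..<0})"
        by (simp add: zs top_ereal_def)
    qed
  next
    case False
    then obtain x0 y0 where x0: "x0 \<in> S" and y0: "y0 \<in> S" and d0: "\<tau> \<le> d x0 y0"
      and Ane: "A \<noteq> {}" by blast
    have ge1: "1 \<le> \<zeta>" if zA: "\<zeta> \<in> A" for \<zeta>
    proof -
      have zpos: "\<zeta> > 0" using zA A_def by auto
      have "d x0 y0 > 0" using d0 assms(5) by linarith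
      then obtain \<mu> where \<mu>: "spreading_zero_set d S (d x0 y0) \<zeta> p \<mu>"
        using zA unfolding A_def by blast
      define E where "E = {Z. y0 \<in> Z \<and> set_dist d x0 Z \<ge> d x0 y0 / \<zeta>}"
      have "p \<le> measure_pmf.prob \<mu> E" using \<mu> x0 y0 unfolding spreading_zero_set_def E_def by auto
      also have "\<dots> \<le> sum (pmf \<mu>) (E \<inter> Pow S)"
        using \<mu> finS by (intro prob_le_sum) (auto simp: spreading_zero_set_def)
      finally have "E \<inter> Pow S \<noteq> {}" using assms(3) by auto
      then obtain Z where Z: "Z \<subseteq> S" "y0 \<in> Z" "set_dist d x0 Z \<ge> d x0 y0 / \<zeta>"
        unfolding E_def by auto
      have "set_dist d x0 Z \<le> d x0 y0" using Z finS finite_subset sd_le by metis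
      then have "d x0 y0 / \<zeta> \<le> d x0 y0 * 1" using Z by simp
      then show ?thesis using zpos \<open>d x0 y0 > 0\<close>
        by (simp add: divide_le_eq)
    qed
    obtain \<zeta>0 where z0: "\<zeta>0 \<in> A" using Ane by blast
    have "1 \<le> Inf (ereal ` A)" using ge1 by (auto intro!: Inf_greatest)
    moreover have "Inf (ereal ` A) \<le> ereal \<zeta>0" using z0 by (auto intro!: Inf_lower)
    ultimately obtain z where zdef: "Inf (ereal ` A) = ereal z" and z1: "1 \<le> z"
      by (cases "Inf (ereal ` A)") auto
    define c where "c = \<tau> / z"
    have cpos: "c > 0" using z1 assms(5) c_def by simp
    define V where "V = (\<lambda>(x,Z). set_dist d x Z) ` (S \<times> Pow S)"
    have finV: "finite V" using finS V_def by simp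
    define m where "m = Max (insert 0 {v\<in>V. v < c})"
    have finM: "finite (insert 0 {v\<in>V. v < c})" using finV by simp
    have m0: "0 \<le> m" unfolding m_def using finM by simp
    have mc: "m < c" unfolding m_def using finM cpos by (subst Max_less_iff) auto
    have mV: "v \<le> m" if "v \<in> V" "v < c" for v
      unfolding m_def using finM that by (intro Max_ge) auto
    define b where "b = (if m > 0 then \<tau> / m else z + 1)"
    have "z < b"
    proof (cases "m > 0")
      case True
      have "m * z < c * z" using mc z1 by simp
      also have "c * z = \<tau>" using c_def z1 by simp
      finally show ?thesis using True b_def by (simp add: pos_less_divide_eq mult.commute)
    qed (simp add: b_def)
    then have "Inf (ereal ` A) < ereal b" using zdef by simp
    then obtain \<zeta> where \<zeta>A: "\<zeta> \<in> A" and \<zeta>b: "\<zeta> < b" by (auto simp: Inf_less_iff)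
    have \<zeta>pos: "\<zeta> > 0" using \<zeta>A A_def by auto
    have m\<zeta>: "m < \<tau> / \<zeta>"
    proof (cases "m > 0")
      case True
      then have "\<zeta> < \<tau> / m" using \<zeta>b b_def by simp
      then have "\<zeta> * m < \<tau>" using True by (simp add: field_simps)
      then show ?thesis using \<zeta>pos by (simp add: field_simps)
    next
      case False then show ?thesis using m0 \<zeta>pos assms(5) by simp
    qed
    obtain \<mu> where \<mu>: "spreading_zero_set d S \<tau> \<zeta> p \<mu>" using \<zeta>A assms(5) unfolding A_def by blast
    have supp: "set_pmf \<mu> \<subseteq> Pow S" using \<mu> unfolding spreading_zero_set_def by blast
    have key: "p \<le> sum (pmf \<mu>) {Z\<in>Pow S. y \<in> Z \<and> c \<le> set_dist d x Z}"
      if xy: "x \<in> S" "y \<in> S" "\<tau> \<le> d x y" for x y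
    proof -
      define E where "E = {Z. y \<in> Z \<and> set_dist d x Z \<ge> \<tau> / \<zeta>}"
      have "p \<le> measure_pmf.prob \<mu> E" using \<mu> xy unfolding spreading_zero_set_def E_def by auto
      also have "\<dots> \<le> sum (pmf \<mu>) (E \<inter> Pow S)"
        using supp finS by (intro prob_le_sum) auto
      also have "\<dots> \<le> sum (pmf \<mu>) {Z\<in>Pow S. y \<in> Z \<and> c \<le> set_dist d x Z}"
      proof (intro sum_mono2)
        show "finite {Z\<in>Pow S. y \<in> Z \<and> c \<le> set_dist d x Z}" using finS by simp
        show "E \<inter> Pow S \<subseteq> {Z\<in>Pow S. y \<in> Z \<and> c \<le> set_dist d x Z}"
        proof
          fix Z assume Z: "Z \<in> E \<inter> Pow S"
          have "set_dist d x Z \<in> V" using Z xy V_def by auto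
          moreover have "m < set_dist d x Z" using Z m\<zeta> E_def by auto
          ultimately have "c \<le> set_dist d x Z" using mV by force
          then show "Z \<in> {Z\<in>Pow S. y \<in> Z \<and> c \<le> set_dist d x Z}" using Z E_def by auto
        qed
      qed auto
      finally show ?thesis .
    qed
    obtain n :: nat and \<phi> :: "'a \<Rightarrow> nat \<Rightarrow> real" where \<phi>: "\<And>x y. L2_set (\<lambda>i. \<phi> x i - \<phi> y i) {..<n} =
       sqrt (\<Sum>Z\<in>Pow S. pmf \<mu> Z * (set_dist d x Z - set_dist d y Z)^2)"
      using embed[OF finS, of \<mu> d] by blast
    show ?thesis
    proof (intro exI[of _ n] exI[of _ \<phi>] conjI ballI impI)
      fix x y assume xy: "x \<in> X" "y \<in> X"
      have "(\<Sum>Z\<in>Pow S. pmf \<mu> Z * (set_dist d x Z - set_dist d y Z)^2)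
          \<le> (\<Sum>Z\<in>Pow S. pmf \<mu> Z * (d x y)^2)"
      proof (intro sum_mono mult_left_mono)
        fix Z assume "Z \<in> Pow S"
        then have "\<bar>set_dist d x Z - set_dist d y Z\<bar> \<le> d x y"
          using sd_lip[OF fms _ xy] assms(2) by blast
        then show "(set_dist d x Z - set_dist d y Z)^2 \<le> (d x y)^2"
          by (metis abs_ge_zero order_trans power2_abs power_mono)
      qed auto
      also have "\<dots> = (d x y)^2 * sum (pmf \<mu>) (Pow S)"
        by (subst sum_distrib_left) (simp add: mult.commute)
      also have "\<dots> \<le> (d x y)^2 * 1"
        using sum_pmf_le1[of "Pow S" \<mu>] finS by (intro mult_left_mono) auto
      finally have "sqrt (\<Sum>Z\<in>Pow S. pmf \<mu> Z * (set_dist d x Z - set_dist d y Z)^2) \<le> sqrt ((d x y)^2)"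
        by (intro real_sqrt_le_mono) simp
      also have "\<dots> = d x y" using dnn xy by simp
      finally show "L2_set (\<lambda>i. \<phi> x i - \<phi> y i) {..<n} \<le> d x y" using \<phi> by simp
    next
      fix x y assume xy: "x \<in> S" "y \<in> S" "\<tau> \<le> d x y"
      define F where "F = {Z\<in>Pow S. y \<in> Z \<and> c \<le> set_dist d x Z}"
      have "c^2 * p \<le> c^2 * sum (pmf \<mu>) F" using key[OF xy] unfolding F_def by (intro mult_left_mono) auto
      also have "\<dots> = (\<Sum>Z\<in>F. pmf \<mu> Z * c^2)" by (simp add: sum_distrib_right mult.commute)
      also have "\<dots> \<le> (\<Sum>Z\<in>F. pmf \<mu> Z * (set_dist d x Z - set_dist d y Z)^2)"
      proof (intro sum_mono mult_left_mono)
        fix Z assume Z: "Z \<in> F"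
        then have "set_dist d y Z = 0" using sd_self[OF fms] assms(2) F_def by auto
        moreover have "c \<le> set_dist d x Z" using Z F_def by auto
        ultimately show "c^2 \<le> (set_dist d x Z - set_dist d y Z)^2"
          using cpos by (simp add: power_mono)
      qed auto
      also have "\<dots> \<le> (\<Sum>Z\<in>Pow S. pmf \<mu> Z * (set_dist d x Z - set_dist d y Z)^2)"
        using finS F_def by (intro sum_mono2) auto
      finally have "sqrt (c^2 * p) \<le> L2_set (\<lambda>i. \<phi> x i - \<phi> y i) {..<n}"
        using \<phi> by simp
      moreover have "sqrt (c^2 * p) = \<tau> * sqrt p / z"
        using cpos c_def z1 assms(5) by (simp add: real_sqrt_mult)
      moreover have "ereal (\<tau> * sqrt p) / zeta_spread d S p = ereal (\<tau> * sqrt p / z)"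
        using zs zdef z1 by simp
      ultimately show "ereal (\<tau> * sqrt p) / zeta_spread d S p \<le> ereal (L2_set (\<lambda>i. \<phi> x i - \<phi> y i) {..<n})"
        by simp
    qed
  qed
qed

end
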